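(* Let $h_1,\dots,h_r$ be positive integers with $h_1+\dots+h_r=n$. Then $$\binom{n}{h_1,\dots,h_r}\le \frac{n^n}{h_r^{h_1}\prod_{i=2}^{r}h_{i-1}^{h_i}}.$$
   Context: $\binom{n}{h_1,\dots,h_r}=\frac{n!}{h_1!\cdots h_r!}$ is the multinomial coefficient. *)

theory Defs
  imports Complex_Main
begin

definition multinomial :: "nat \<Rightarrow> nat \<Rightarrow> (nat \<Rightarrow> nat) \<Rightarrow> real" where
  "multinomial n r h = fact n / (\<Prod>i=1..r. fact (h i))"

end

theory Submission
  imports Defs
begin

lemma binom_term_le:
  fixes a b :: real
  assumes "a \<ge> 0" "b \<ge> 0" "k \<le> N"
  shows "real (N choose k) * a ^ (N - k) * b ^ k \<le> (a + b) ^ N"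
proof -
  have "(a + b) ^ N = (\<Sum>j\<le>N. real (N choose j) * b ^ j * a ^ (N - j))"
    by (subst add.commute, rule binomial_ring)
  moreover have "real (N choose k) * b ^ k * a ^ (N - k) \<le> (\<Sum>j\<le>N. real (N choose j) * b ^ j * a ^ (N - j))"
    by (rule member_le_sum) (use assms in auto)
  ultimately show ?thesis by (simp add: mult_ac)
qed

lemma multi_gen:
  fixes x :: "nat \<Rightarrow> real" and h :: "nat \<Rightarrow> nat"
  assumes "\<And>i. x i \<ge> 0"
  shows "fact (\<Sum>i=1..m. h i) * (\<Prod>i=1..m. x i ^ h i)
        \<le> (\<Sum>i=1..m. x i) ^ (\<Sum>i=1..m. h i) * (\<Prod>i=1..m. fact (h i))"
proof (induction m)
  case 0
  then show ?case by simp
next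
  case (Suc m)
  define S where "S = (\<Sum>i=1..m. h i)"
  define k where "k = h (Suc m)"
  define a where "a = (\<Sum>i=1..m. x i)"
  define b where "b = x (Suc m)"
  define P where "P = (\<Prod>i=1..m. (fact (h i) :: real))"
  define Q where "Q = (\<Prod>i=1..m. x i ^ h i)"
  have a0: "a \<ge> 0" unfolding a_def using assms by (simp add: sum_nonneg)
  have b0: "b \<ge> 0" unfolding b_def using assms by simp
  have Q0: "Q \<ge> 0" unfolding Q_def using assms by (simp add: prod_nonneg)
  have IH: "fact S * Q \<le> a ^ S * P" using Suc.IH unfolding S_def Q_def a_def P_def .
  have fN: "(fact (S + k) :: real) = real ((S + k) choose k) * fact S * fact k"
  proof -
    have "fact (S + k) = ((S + k) choose k) * fact k * fact (S + k - k)"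
      using binomial_fact_lemma[of k "S+k"] by (simp add: mult_ac)
    then have "(fact (S + k) :: real) = of_nat (((S + k) choose k) * fact k * fact S)"
      by (metis add_diff_cancel_right' of_nat_fact)
    then show ?thesis by (simp add: mult_ac)
  qed
  have C0: "real ((S + k) choose k) * fact k * b ^ k \<ge> 0" using b0 by simp
  have "fact (S + k) * (Q * b ^ k) = (real ((S + k) choose k) * fact k * b ^ k) * (fact S * Q)"
    using fN by (simp add: mult_ac)
  also have "\<dots> \<le> (real ((S + k) choose k) * fact k * b ^ k) * (a ^ S * P)"
    by (rule mult_left_mono[OF IH C0])
  also have "\<dots> = (real ((S + k) choose k) * a ^ (S + k - k) * b ^ k) * (P * fact k)"
    by (simp add: mult_ac)
  also have "\<dots> \<le> (a + b) ^ (S + k) * (P * fact k)"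
    by (rule mult_right_mono[OF binom_term_le[OF a0 b0]]) (auto simp: P_def intro!: mult_nonneg_nonneg prod_nonneg)
  finally show ?case
    unfolding S_def k_def a_def b_def P_def Q_def by simp
qed

theorem mainTheorem8:
  fixes h :: "nat \<Rightarrow> nat" and r n :: nat
  assumes "r \<ge> 1"
    and "\<And>i. i \<in> {1..r} \<Longrightarrow> h i > 0"
    and "(\<Sum>i=1..r. h i) = n"
  shows "multinomial n r h \<le>
    real n ^ n / (real (h r) ^ h 1 * (\<Prod>i=2..r. real (h (i - 1)) ^ h i))"
proof -
  define x where "x i = (if i = 1 then real (h r) else real (h (i - 1)))" for i
  have x0: "\<And>i. x i \<ge> 0" unfolding x_def by simp
  have split: "{1..r} = insert 1 {2..r}" using assms(1) by auto
  have sx: "(\<Sum>i=1..r. x i) = real n"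
  proof -
    have "(\<Sum>i=1..r. x i) = x 1 + (\<Sum>i=2..r. x i)" unfolding split by simp
    also have "(\<Sum>i=2..r. x i) = (\<Sum>i=2..r. real (h (i - 1)))"
      by (rule sum.cong) (auto simp: x_def)
    also have "\<dots> = (\<Sum>j=1..r-1. real (h j))"
    proof -
      obtain m where m: "r = Suc m" using assms(1) by (cases r) auto
      have "(\<Sum>i=Suc 1..Suc m. real (h (i - 1))) = (\<Sum>j=1..m. real (h (Suc j - 1)))"
        by (rule sum.shift_bounds_cl_Suc_ivl)
      then show ?thesis by (simp add: m numeral_2_eq_2)
    qed
    also have "x 1 + \<dots> = (\<Sum>j=1..r. real (h j))"
      using assms(1) by (cases r) (auto simp: x_def sum.cl_ivl_Suc)
    finally show ?thesis using assms(3) by (metis of_nat_sum)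
  qed
  have px: "(\<Prod>i=1..r. x i ^ h i) = real (h r) ^ h 1 * (\<Prod>i=2..r. real (h (i - 1)) ^ h i)"
  proof -
    have "(\<Prod>i=1..r. x i ^ h i) = x 1 ^ h 1 * (\<Prod>i=2..r. x i ^ h i)" unfolding split by simp
    also have "(\<Prod>i=2..r. x i ^ h i) = (\<Prod>i=2..r. real (h (i - 1)) ^ h i)"
      by (rule prod.cong) (auto simp: x_def)
    finally show ?thesis by (simp add: x_def)
  qed
  have M: "fact n * (\<Prod>i=1..r. x i ^ h i) \<le> real n ^ n * (\<Prod>i=1..r. fact (h i))"
    using multi_gen[of x h r, OF x0] assms(3) sx by simp
  have Qpos: "(\<Prod>i=1..r. x i ^ h i) > 0"
  proof (intro prod_pos)
    fix i assume i: "i \<in> {1..r}"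
    show "0 < x i ^ h i"
    proof (cases "i = 1")
      case True then show ?thesis using assms(1,2) by (auto simp: x_def)
    next
      case False then show ?thesis using i assms(2)[of "i - 1"] by (auto simp: x_def Suc_le_eq)
    qed
  qed
  have Ppos: "(\<Prod>i=1..r. (fact (h i) :: real)) > 0" by (intro prod_pos) auto
  show ?thesis unfolding multinomial_def px[symmetric]
    using M Qpos Ppos by (simp add: divide_simps mult_ac)
qed

end
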